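(* Assume the setting of the context and fix $\epsilon_2>0$. Consider any (finite or infinite) sequence of subdivision operations applied to the interval partitions. Then after finitely many subdivisions, $\hat{\mathcal{P}}(\epsilon_2)$ becomes invariant to further subdivision: there is $N$ such that every subdivision after the $N$-th leaves $\hat{\mathcal{P}}(\epsilon_2)$ (as a function of $\theta$) unchanged.
   Context: For $t\in[0,T]$ and trajectory parameters $\theta$, the robot pieces $b_{ij}(t,\theta)\subset\mathbb{R}^3$ and obstacle pieces $o_k\subset\mathbb{R}^3$ are given (finitely many triples $(i,j,k)$); $\text{dist}$ is the shortest Euclidean distance between sets and $d_0\ge0$. $\mathcal{P}$ is a barrier function on $(0,\infty)$, and $\mathcal{P}_{ijk}(t,\theta)=\mathcal{P}(\text{dist}(b_{ij}(t,\theta),o_k)-d_0)$. For each triple $(i,j,k)$ there is a finite partition of $[0,T]$ into closed intervals $[T_0^l,T_1^l]$ (indexed by $l$); a subdivision replaces one interval $[T_0^l,T_1^l]$ of one triple's partition by $[T_0^l,(T_0^l+T_1^l)/2]$ and $[(T_0^l+T_1^l)/2,T_1^l]$. Let $\mathcal{P}_{ijkl}(\theta)=\mathcal{P}_{ijk}((T_0^l+T_1^l)/2,\theta)$. The hybrid penalty is $$\hat{\mathcal{P}}(\epsilon_2)=\sum_{ijkl}\begin{cases}(T_1^l-T_0^l)\mathcal{P}_{ijkl}&T_1^l-T_0^l\ge\epsilon_2\\ \int_{T_0^l}^{T_1^l}\mathcal{P}_{ijk}(t,\theta)\,dt&T_1^l-T_0^l<\epsilon_2,\end{cases}$$ the sum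 running over all triples and all intervals of their current partitions. *)

theory Defs
  imports "HOL-Analysis.Analysis" "HOL-Library.Extended_Nat"
begin

definition Pijk ::
  "(real \<Rightarrow> real) \<Rightarrow> real \<Rightarrow> ('i \<Rightarrow> 'j \<Rightarrow> real \<Rightarrow> 'th \<Rightarrow> (real^3) set)
   \<Rightarrow> ('k \<Rightarrow> (real^3) set) \<Rightarrow> ('i \<times> 'j \<times> 'k) \<Rightarrow> real \<Rightarrow> 'th \<Rightarrow> real" where
  "Pijk P d0 b obs tr t th =
     (case tr of (i, j, k) \<Rightarrow> P (setdist (b i j t th) (obs k) - d0))"

definition interval_partition :: "real \<Rightarrow> (real \<times> real) set \<Rightarrow> bool" where
  "interval_partition T S \<longleftrightarrow>
     finite S \<and> (\<forall>(a, b) \<in> S. a < b) \<and>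
     (\<lambda>(a, b). {a..b}) ` S division_of {0..T}"

definition subdivision ::
  "('t set) \<Rightarrow> ('t \<Rightarrow> (real \<times> real) set) \<Rightarrow> ('t \<Rightarrow> (real \<times> real) set) \<Rightarrow> bool" where
  "subdivision Tr s s' \<longleftrightarrow>
     (\<exists>tr \<in> Tr. \<exists>a b. (a, b) \<in> s tr \<and>
        s' = s(tr := (s tr - {(a, b)}) \<union> {(a, (a + b) / 2), ((a + b) / 2, b)}))"

definition hybrid_penalty ::
  "('t set) \<Rightarrow> ('t \<Rightarrow> real \<Rightarrow> 'th \<Rightarrow> real) \<Rightarrow> real \<Rightarrow> ('t \<Rightarrow> (real \<times> real) set)
   \<Rightarrow> 'th \<Rightarrow> real" where
  "hybrid_penalty Tr Q eps2 s th =
     (\<Sum>tr \<in> Tr. \<Sum>(a, b) \<in> s tr.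
        if b - a \<ge> eps2 then (b - a) * Q tr ((a + b) / 2) th
        else integral {a..b} (\<lambda>t. Q tr t th))"

end

theory Submission
  imports Defs
begin

definition pinv :: "real \<Rightarrow> (real \<times> real) set \<Rightarrow> bool" where
  "pinv T S \<longleftrightarrow> finite S \<and> (\<forall>p\<in>S. 0 \<le> fst p \<and> fst p < snd p \<and> snd p \<le> T) \<and>
     (\<forall>p\<in>S. \<forall>q\<in>S. p \<noteq> q \<longrightarrow> snd p \<le> fst q \<or> snd q \<le> fst p)"

definition hpot :: "real \<Rightarrow> real \<Rightarrow> real" where
  "hpot e l = (if l \<ge> e then (l / e) * (log 2 (l / e) + 1) else 0)"

lemma hpot_nonneg: "e > 0 \<Longrightarrow> hpot e l \<ge> 0"
  unfolding hpot_def by auto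

lemma hpot_split_large:
  assumes e: "e > 0" and l: "l \<ge> e"
  shows "hpot e (l/2) + hpot e (l/2) \<le> hpot e l - 1"
proof -
  define x where "x = l / e"
  have x1: "x \<ge> 1" using e l by (simp add: x_def field_simps)
  have hl: "hpot e l = x * (log 2 x + 1)" using l by (simp add: hpot_def x_def)
  have lg: "log 2 x \<ge> 0" using x1 by simp
  show ?thesis
  proof (cases "l/2 \<ge> e")
    case True
    have lx: "log 2 (x/2) = log 2 x - 1" using x1 by (simp add: log_divide)
    have "hpot e (l/2) = (l/2/e) * (log 2 (l/2/e) + 1)" using True by (simp add: hpot_def)
    also have "l/2/e = x/2" by (simp add: x_def)
    finally have "hpot e (l/2) = (x/2) * log 2 x" using lx by simp
    then show ?thesis using hl x1 by (simp add: algebra_simps)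
  next
    case False
    then have "hpot e (l/2) = 0" by (simp add: hpot_def)
    moreover have "x * (log 2 x + 1) \<ge> 1 * 1"
      using x1 lg by (intro mult_mono) auto
    ultimately show ?thesis using hl by simp
  qed
qed

lemma hpot_split_small:
  assumes "l < e" "l \<ge> 0"
  shows "hpot e (l/2) = 0" "hpot e l = 0"
  using assms by (auto simp: hpot_def)

lemma interval_partition_pinv:
  assumes "interval_partition T S" shows "pinv T S"
proof -
  have fin: "finite S" and lt: "\<forall>(a, b) \<in> S. a < b"
    and div: "(\<lambda>(a, b). {a..b}) ` S division_of {0..T}"
    using assms by (auto simp: interval_partition_def)
  have A: "0 \<le> fst p \<and> fst p < snd p \<and> snd p \<le> T" if "p \<in> S" for p
  proof -
    obtain a b where p: "p = (a,b)" by force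
    have ab: "a < b" using lt that p by auto
    have "{a..b} \<subseteq> {0..T}" using division_ofD(2)[OF div, of "{a..b}"] that p by force
    then show ?thesis using ab p by auto
  qed
  have B: "snd p \<le> fst q \<or> snd q \<le> fst p" if "p \<in> S" "q \<in> S" "p \<noteq> q" for p q
  proof -
    obtain a b where p: "p = (a,b)" by force
    obtain c d where q: "q = (c,d)" by force
    have ab: "a < b" and cd: "c < d" using lt that p q by auto
    have ne: "{a..b} \<noteq> {c..d}" using ab cd that(3) p q by auto
    have "interior {a..b} \<inter> interior {c..d} = {}"
      using division_ofD(5)[OF div, of "{a..b}" "{c..d}"] that p q ne by force
    then have "{a<..<b} \<inter> {c<..<d} = {}" by simp
    then have "b \<le> c \<or> d \<le> a"
    proof (rule contrapos_pp)
      assume "\<not> (b \<le> c \<or> d \<le> a)"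
      then have "(max a c + min b d)/2 \<in> {a<..<b} \<inter> {c<..<d}"
        using ab cd by (auto simp: max_def min_def)
      then show "{a<..<b} \<inter> {c<..<d} \<noteq> {}" by blast
    qed
    then show ?thesis using p q by auto
  qed
  show ?thesis unfolding pinv_def using fin A B by blast
qed

lemma split_facts:
  assumes inv: "pinv T S" and ab: "(a,b) \<in> S"
  defines "m \<equiv> (a+b)/2"
  defines "S' \<equiv> (S - {(a,b)}) \<union> {(a, m), (m, b)}"
  shows "pinv T S'"
    and "\<And>f :: real \<times> real \<Rightarrow> 'c::ab_group_add. sum f S' = sum f S - f (a,b) + f (a,m) + f (m,b)"
    and "a < b" "0 \<le> a" "b \<le> T" "m - a = (b - a)/2" "b - m = (b-a)/2"
proof -
  have fin: "finite S" and A: "\<forall>p\<in>S. 0 \<le> fst p \<and> fst p < snd p \<and> snd p \<le> T"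
    and B: "\<forall>p\<in>S. \<forall>q\<in>S. p \<noteq> q \<longrightarrow> snd p \<le> fst q \<or> snd q \<le> fst p"
    using inv by (auto simp: pinv_def)
  show ab': "a < b" "0 \<le> a" "b \<le> T" using A ab by auto
  show "m - a = (b - a)/2" "b - m = (b-a)/2" by (simp_all add: m_def field_simps)
  have am: "a < m" "m < b" using ab' by (auto simp: m_def)
  have n1: "(a,m) \<notin> S - {(a,b)}"
  proof
    assume "(a,m) \<in> S - {(a,b)}"
    then have "m \<le> a \<or> b \<le> a" using B ab by (metis DiffE fst_conv insertI1 snd_conv)
    then show False using am ab' by auto
  qed
  have n2: "(m,b) \<notin> S - {(a,b)}"
  proof
    assume "(m,b) \<in> S - {(a,b)}"
    then have "b \<le> a \<or> b \<le> m" using B ab by (metis DiffE fst_conv insertI1 snd_conv)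
    then show False using am ab' by auto
  qed
  have n3: "(a,m) \<noteq> (m,b)" using am by auto
  show "sum f S' = sum f S - f (a,b) + f (a,m) + f (m,b)" for f :: "real \<times> real \<Rightarrow> 'c::ab_group_add"
  proof -
    have "sum f S' = sum f (S - {(a,b)}) + sum f {(a,m),(m,b)}"
      unfolding S'_def using fin n1 n2 by (intro sum.union_disjoint) auto
    also have "sum f {(a,m),(m,b)} = f (a,m) + f (m,b)" using n3 by simp
    also have "sum f (S - {(a,b)}) = sum f S - f (a,b)" using fin ab by (simp add: sum_diff1)
    finally show ?thesis by simp
  qed
  show "pinv T S'"
    unfolding pinv_def
  proof (intro conjI)
    show "finite S'" using fin by (simp add: S'_def)
    show "\<forall>p\<in>S'. 0 \<le> fst p \<and> fst p < snd p \<and> snd p \<le> T"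
      using A am ab' by (auto simp: S'_def)
    show "\<forall>p\<in>S'. \<forall>q\<in>S'. p \<noteq> q \<longrightarrow> snd p \<le> fst q \<or> snd q \<le> fst p"
    proof (intro ballI impI)
      fix p q assume p: "p \<in> S'" and q: "q \<in> S'" and pq: "p \<noteq> q"
      have C: "snd r \<le> a \<or> b \<le> fst r" if "r \<in> S - {(a,b)}" for r
        using B ab that by force
      have D: "snd r \<le> a \<or> m \<le> fst r" "snd r \<le> m \<or> b \<le> fst r" if "r \<in> S - {(a,b)}" for r
        using C[OF that] am A that by force+
      show "snd p \<le> fst q \<or> snd q \<le> fst p"
        using p q pq B D[of p] D[of q] unfolding S'_def by auto
    qed
  qed
qed

definition Phi :: "'t set \<Rightarrow> real \<Rightarrow> ('t \<Rightarrow> (real \<times> real) set) \<Rightarrow> real" where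
  "Phi Tr e S = (\<Sum>tr\<in>Tr. \<Sum>p\<in>S tr. hpot e (snd p - fst p))"

lemma outer_sum:
  fixes g :: "'t \<Rightarrow> (real \<times> real) set \<Rightarrow> 'c::ab_group_add"
  assumes "finite Tr" "tr \<in> Tr"
  shows "(\<Sum>t\<in>Tr. g t ((S(tr := X)) t)) = (\<Sum>t\<in>Tr. g t (S t)) - g tr (S tr) + g tr X"
proof -
  have "(\<Sum>t\<in>Tr. g t ((S(tr := X)) t)) = g tr X + (\<Sum>t\<in>Tr - {tr}. g t ((S(tr := X)) t))"
    using assms by (simp add: sum.remove)
  also have "(\<Sum>t\<in>Tr - {tr}. g t ((S(tr := X)) t)) = (\<Sum>t\<in>Tr - {tr}. g t (S t))"
    by (intro sum.cong) auto
  also have "(\<Sum>t\<in>Tr - {tr}. g t (S t)) = (\<Sum>t\<in>Tr. g t (S t)) - g tr (S tr)"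
    using assms by (simp add: sum_diff1)
  finally show ?thesis by (simp add: algebra_simps)
qed

lemma step_lemma:
  fixes Q :: "'t \<Rightarrow> real \<Rightarrow> 'th \<Rightarrow> real"
  assumes fin: "finite Tr" and e: "eps2 > 0"
    and integ0: "\<forall>tr\<in>Tr. \<forall>th. (\<lambda>t. Q tr t th) integrable_on {0..T}"
    and inv: "\<forall>tr\<in>Tr. pinv T (S tr)"
    and sub: "subdivision Tr S S'"
  shows "(\<forall>tr\<in>Tr. pinv T (S' tr)) \<and> Phi Tr eps2 S' \<le> Phi Tr eps2 S \<and>
    (hybrid_penalty Tr Q eps2 S' \<noteq> hybrid_penalty Tr Q eps2 S \<longrightarrow> Phi Tr eps2 S' \<le> Phi Tr eps2 S - 1)"
proof -
  have integ: "\<And>tr th. tr \<in> Tr \<Longrightarrow> (\<lambda>t. Q tr t th) integrable_on {0..T}" using integ0 by blast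
  obtain tr a c where tr: "tr \<in> Tr" and ac: "(a, c) \<in> S tr"
    and S': "S' = S(tr := (S tr - {(a, c)}) \<union> {(a, (a + c) / 2), ((a + c) / 2, c)})"
    using sub unfolding subdivision_def by blast
  define m where "m = (a + c) / 2"
  define X where "X = (S tr - {(a, c)}) \<union> {(a, m), (m, c)}"
  have S'X: "S' = S(tr := X)" using S' by (simp add: X_def m_def)
  have itr: "pinv T (S tr)" using inv tr by blast
  note F = split_facts[OF itr ac, folded m_def, folded X_def]
  have inv': "\<forall>t\<in>Tr. pinv T (S' t)" using inv F(1) by (simp add: S'X)
  define G where "G = (\<lambda>t (A::(real \<times> real) set) th. \<Sum>(a, b) \<in> A.
        if b - a \<ge> eps2 then (b - a) * Q t ((a + b) / 2) th
        else integral {a..b} (\<lambda>x. Q t x th))"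
  define H where "H = (\<lambda>(t::'t) A. \<Sum>p\<in>A. hpot eps2 (snd p - fst p))"
  have hpG: "hybrid_penalty Tr Q eps2 R th = (\<Sum>t\<in>Tr. G t (R t) th)" for R th
    by (simp add: hybrid_penalty_def G_def)
  have PhiH: "Phi Tr eps2 R = (\<Sum>t\<in>Tr. H t (R t))" for R
    by (simp add: Phi_def H_def)
  have Hs: "H tr X = H tr (S tr) - hpot eps2 (c - a) + hpot eps2 ((c - a)/2) + hpot eps2 ((c - a)/2)"
    unfolding H_def using F(2)[of "\<lambda>p. hpot eps2 (snd p - fst p)"] F(6,7) by simp
  have Phis: "Phi Tr eps2 S' = Phi Tr eps2 S - H tr (S tr) + H tr X"
    unfolding PhiH S'X by (rule outer_sum[OF fin tr])
  show ?thesis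
  proof (cases "c - a \<ge> eps2")
    case True
    have "Phi Tr eps2 S' \<le> Phi Tr eps2 S - 1"
      using hpot_split_large[OF e True] Phis Hs by simp
    then show ?thesis using inv' by simp
  next
    case False
    have z: "hpot eps2 ((c - a)/2) = 0" "hpot eps2 (c - a) = 0"
      using hpot_split_small[of "c - a" eps2] False F(3) by auto
    have "Phi Tr eps2 S' = Phi Tr eps2 S" using Phis Hs z by simp
    moreover have "hybrid_penalty Tr Q eps2 S' = hybrid_penalty Tr Q eps2 S"
    proof
      fix th
      have small: "\<not> eps2 \<le> m - a" "\<not> eps2 \<le> c - m" using F(6,7) False e by auto
      have int: "(\<lambda>x. Q tr x th) integrable_on {a..c}"
        by (rule integrable_on_subinterval[OF integ[OF tr]]) (use F(4,5) in auto)
      have comb: "integral {a..m} (\<lambda>x. Q tr x th) + integral {m..c} (\<lambda>x. Q tr x th)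
          = integral {a..c} (\<lambda>x. Q tr x th)"
        using Henstock_Kurzweil_Integration.integral_combine[OF _ _ int, of m] F(3) by (simp add: m_def)
      have GX: "G tr X th = G tr (S tr) th"
      proof -
        have "G tr X th = (\<Sum>p\<in>X. (\<lambda>(a, b).
          if b - a \<ge> eps2 then (b - a) * Q tr ((a + b) / 2) th
          else integral {a..b} (\<lambda>x. Q tr x th)) p)" by (simp add: G_def)
        also have "\<dots> = G tr (S tr) th - integral {a..c} (\<lambda>x. Q tr x th)
           + integral {a..m} (\<lambda>x. Q tr x th) + integral {m..c} (\<lambda>x. Q tr x th)"
          by (subst F(2)) (use False small in \<open>simp add: G_def\<close>)
        finally show ?thesis using comb by simp
      qed
      have "(\<Sum>t\<in>Tr. G t (S' t) th) = (\<Sum>t\<in>Tr. G t (S t) th) - G tr (S tr) th + G tr X th"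
        unfolding S'X by (rule outer_sum[OF fin tr, where g = "\<lambda>t A. G t A th"])
      then show "hybrid_penalty Tr Q eps2 S' th = hybrid_penalty Tr Q eps2 S th"
        using GX by (simp add: hpG)
    qed
    ultimately show ?thesis using inv' by simp
  qed
qed

theorem lemma3:
  fixes P :: "real \<Rightarrow> real"
    and d0 T eps2 :: real
    and b :: "'i \<Rightarrow> 'j \<Rightarrow> real \<Rightarrow> 'th \<Rightarrow> (real^3) set"
    and obs :: "'k \<Rightarrow> (real^3) set"
    and Tr :: "('i \<times> 'j \<times> 'k) set"
    and s :: "nat \<Rightarrow> ('i \<times> 'j \<times> 'k) \<Rightarrow> (real \<times> real) set"
    and L :: enat
  assumes "finite Tr"
    and "d0 \<ge> 0"
    and "eps2 > 0"
    and integrable: "\<And>tr th. tr \<in> Tr \<Longrightarrow> (\<lambda>t. Pijk P d0 b obs tr t th) integrable_on {0..T}"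
    and init: "\<And>tr. tr \<in> Tr \<Longrightarrow> interval_partition T (s 0 tr)"
    and steps: "\<And>n. enat n < L \<Longrightarrow> subdivision Tr (s n) (s (Suc n))"
  shows "\<exists>N. \<forall>n. N \<le> n \<and> enat n < L \<longrightarrow>
           hybrid_penalty Tr (Pijk P d0 b obs) eps2 (s (Suc n))
             = hybrid_penalty Tr (Pijk P d0 b obs) eps2 (s n)"
proof -
  define Q where "Q = Pijk P d0 b obs"
  have integQ: "\<forall>tr\<in>Tr. \<forall>th. (\<lambda>t. Q tr t th) integrable_on {0..T}"
    using integrable by (simp add: Q_def)
  define hp where "hp = (\<lambda>n. hybrid_penalty Tr Q eps2 (s n))"
  define Ph where "Ph = (\<lambda>n. Phi Tr eps2 (s n))"
  have invn: "enat n \<le> L \<Longrightarrow> \<forall>tr\<in>Tr. pinv T (s n tr)" for n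
  proof (induction n)
    case 0
    then show ?case using init interval_partition_pinv by blast
  next
    case (Suc n)
    then have lt: "enat n < L" by (simp add: Suc_ile_eq)
    then show ?case using step_lemma[OF assms(1,3) integQ Suc.IH steps[OF lt]]
      by (simp add: less_imp_le)
  qed
  have stp: "enat n < L \<Longrightarrow> Ph (Suc n) \<le> Ph n \<and> (hp (Suc n) \<noteq> hp n \<longrightarrow> Ph (Suc n) \<le> Ph n - 1)" for n
    using step_lemma[OF assms(1,3) integQ invn[OF less_imp_le] steps, of n]
    by (simp add: Ph_def hp_def)
  define B where "B = {n. enat n < L \<and> hp (Suc n) \<noteq> hp n}"
  have Phnn: "Ph n \<ge> 0" for n
    unfolding Ph_def Phi_def using hpot_nonneg[OF assms(3)] by (intro sum_nonneg) auto
  have desc: "enat n \<le> L \<Longrightarrow> Ph n + real (card (B \<inter> {..<n})) \<le> Ph 0" for n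
  proof (induction n)
    case 0
    then show ?case by simp
  next
    case (Suc n)
    then have lt: "enat n < L" by (simp add: Suc_ile_eq)
    have IH: "Ph n + real (card (B \<inter> {..<n})) \<le> Ph 0" using Suc.IH lt by (simp add: less_imp_le)
    show ?case
    proof (cases "n \<in> B")
      case True
      have "B \<inter> {..<Suc n} = insert n (B \<inter> {..<n})" using True by auto
      then have "card (B \<inter> {..<Suc n}) = Suc (card (B \<inter> {..<n}))" by simp
      moreover have "Ph (Suc n) \<le> Ph n - 1" using stp[OF lt] True by (simp add: B_def)
      ultimately show ?thesis using IH by simp
    next
      case False
      have "B \<inter> {..<Suc n} = B \<inter> {..<n}" using False by (auto simp: less_Suc_eq)
      moreover have "Ph (Suc n) \<le> Ph n" using stp[OF lt] by simp
      ultimately show ?thesis using IH by simp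
    qed
  qed
  have finB: "finite B"
  proof (rule ccontr)
    assume inf: "infinite B"
    obtain C where C: "C \<subseteq> B" "finite C" "card C = Suc (nat (ceiling (Ph 0)))"
      using infinite_arbitrarily_large[OF inf] by blast
    then have Cne: "C \<noteq> {}" by auto
    define n where "n = Suc (Max C)"
    have "Max C \<in> B" using C Cne by (meson Max_in subsetD)
    then have "enat (Max C) < L" by (simp add: B_def)
    then have nL: "enat n \<le> L" by (simp add: n_def Suc_ile_eq)
    have "C \<subseteq> B \<inter> {..<n}" using C Cne by (auto simp: n_def le_imp_less_Suc)
    then have "card C \<le> card (B \<inter> {..<n})" by (intro card_mono) auto
    then have "real (card C) \<le> Ph 0" using desc[OF nL] Phnn[of n] by linarith
    moreover have "real (card C) > Ph 0" using C(3) by linarith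
    ultimately show False by simp
  qed
  obtain N where N: "\<forall>n\<in>B. n < N" using finite_nat_bounded[OF finB] by auto
  show ?thesis
  proof (intro exI[of _ N] allI impI)
    fix n assume "N \<le> n \<and> enat n < L"
    then have "n \<notin> B" using N by auto
    then show "hybrid_penalty Tr (Pijk P d0 b obs) eps2 (s (Suc n))
             = hybrid_penalty Tr (Pijk P d0 b obs) eps2 (s n)"
      using \<open>N \<le> n \<and> enat n < L\<close> by (simp add: B_def hp_def Q_def)
  qed
qed

end
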